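(* Let $n\geqslant1$, $a,b>0$, $\sigma\in(0,1)\cup(1,+\infty)$, and let $\widehat v(t,\xi)$ be the partial Fourier transform of the solution of $v_{tt}-a\Delta v+b(-\Delta)^\sigma v+v_t=0$, $v(0)=v_0$, $v_t(0)=v_1$, i.e. $\widehat v=\frac{\lambda_+e^{\lambda_-t}-\lambda_-e^{\lambda_+t}}{\lambda_+-\lambda_-}\widehat v_0+\frac{e^{\lambda_+t}-e^{\lambda_-t}}{\lambda_+-\lambda_-}\widehat v_1$ with $\lambda_\pm=\frac12\big(-1\pm\sqrt{1-4(a|\xi|^2+b|\xi|^{2\sigma})}\big)$. There exist $\varepsilon_0>0$ sufficiently small and constants $c,C>0$ such that for all $t\geqslant0$ and all $\xi$ with $|\xi|\leqslant\varepsilon_0$: if $\sigma\in(0,1)$, $$|\widehat v|\leqslant C e^{-c|\xi|^{2\sigma}t}(|\widehat v_0|+|\widehat v_1|),\quad \big|\widehat v-e^{-b|\xi|^{2\sigma}t}(\widehat v_0+\widehat v_1)\big|\leqslant C\big(e^{-ct}+|\xi|^{\min\{2-2\sigma,2\sigma\}}e^{-c|\xi|^{2\sigma}t}\big)(|\widehat v_0|+|\widehat v_1|);$$ if $\sigma\in(1,+\infty)$, $$|\widehat v|\leqslant C e^{-c|\xi|^{2}t}(|\widehat v_0|+|\widehat v_1|),\quad \big|\widehat v-e^{-a|\xi|^{2}t}(\widehat v_0+\widehat v_1)\big|\leqslant C\big(e^{-ct}+|\xi|^{\min\{2,2\sigma-2\}}e^{-c|\xi|^{2}t}\big)(|\widehat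 v_0|+|\widehat v_1|).$$
   Context: $(-\Delta)^\sigma$ is the Fourier multiplier with symbol $|\xi|^{2\sigma}$. *)

theory Defs
  imports "HOL-Analysis.Analysis"
begin

definition lam_plus :: "real \<Rightarrow> real \<Rightarrow> real \<Rightarrow> real \<Rightarrow> complex" where
  "lam_plus a b \<sigma> r = (-1 + csqrt (complex_of_real (1 - 4 * (a * r^2 + b * r powr (2*\<sigma>))))) / 2"

definition lam_minus :: "real \<Rightarrow> real \<Rightarrow> real \<Rightarrow> real \<Rightarrow> complex" where
  "lam_minus a b \<sigma> r = (-1 - csqrt (complex_of_real (1 - 4 * (a * r^2 + b * r powr (2*\<sigma>))))) / 2"

definition vhat :: "real \<Rightarrow> real \<Rightarrow> real \<Rightarrow> ('n::euclidean_space \<Rightarrow> complex) \<Rightarrow> ('n \<Rightarrow> complex)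
    \<Rightarrow> real \<Rightarrow> 'n \<Rightarrow> complex" where
  "vhat a b \<sigma> v0 v1 t \<xi> =
     (let lp = lam_plus a b \<sigma> (norm \<xi>); lm = lam_minus a b \<sigma> (norm \<xi>) in
       (lp * exp (lm * of_real t) - lm * exp (lp * of_real t)) / (lp - lm) * v0 \<xi>
     + (exp (lp * of_real t) - exp (lm * of_real t)) / (lp - lm) * v1 \<xi>)"

end

theory Submission
  imports Defs
begin


lemma abs3: "\<bar>(x::real) + y + z\<bar> \<le> \<bar>x\<bar> + \<bar>y\<bar> + \<bar>z\<bar>"
  using abs_triangle_ineq[of "x+y" z] abs_triangle_ineq[of x y] by linarith

lemma abs3': "\<bar>(x::real) - y + z\<bar> \<le> \<bar>x\<bar> + \<bar>y\<bar> + \<bar>z\<bar>"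
  using abs3[of x "-y" z] by simp

lemma core:
  fixes f g t D lp lm :: real
  assumes g0: "0 \<le> g" and gf: "g \<le> f" and f3: "f \<le> 3/16" and t0: "0 \<le> t"
    and Dd: "D = sqrt (1 - 4*f)" and lpd: "lp = (-1 + D)/2" and lmd: "lm = (-1 - D)/2"
  shows "\<bar>(lp*exp(lm*t) - lm*exp(lp*t))/(lp-lm)\<bar> \<le> 3*exp(-g*t)"
    and "\<bar>(exp(lp*t) - exp(lm*t))/(lp-lm)\<bar> \<le> 3*exp(-g*t)"
    and "\<bar>(lp*exp(lm*t) - lm*exp(lp*t))/(lp-lm) - exp(-g*t)\<bar>
           \<le> 2*exp(-t/2) + 8*f*exp(-g*t) + (f-g+4*f^2)*t*exp(-g*t)"
    and "\<bar>(exp(lp*t) - exp(lm*t))/(lp-lm) - exp(-g*t)\<bar>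
           \<le> 2*exp(-t/2) + 8*f*exp(-g*t) + (f-g+4*f^2)*t*exp(-g*t)"
proof -
  have f0: "0 \<le> f" using g0 gf by linarith
  have h14: "0 \<le> 1 - 4*f" using f3 by linarith
  then have D2: "D^2 = 1 - 4*f" using Dd real_sqrt_pow2 by metis
  have D0: "0 \<le> D" using Dd h14 by simp
  have Dh: "1/2 \<le> D"
  proof -
    have "sqrt (1/4) \<le> sqrt (1 - 4*f)" using f3 by (intro real_sqrt_le_mono) simp
    moreover have "sqrt (1/4::real) = 1/2" by (simp add: real_sqrt_divide)
    ultimately show ?thesis using Dd by simp
  qed
  have D1: "D \<le> 1" using Dd f0 by simp
  have diff: "lp - lm = D" using lpd lmd by simp
  have omD0: "0 \<le> 1 - D" using D1 by simp
  have omD: "1 - D \<le> 4*f"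
  proof -
    have "(1-D)*(1+D) = 4*f" using D2 by (simp add: algebra_simps power2_eq_square)
    moreover have "(1-D)*1 \<le> (1-D)*(1+D)" using D0 D1 by (intro mult_left_mono) auto
    ultimately show ?thesis by simp
  qed
  have lpf: "lp \<le> -f"
  proof -
    have q: "(1-2*f)^2 - D^2 = 4*f^2" using D2 by (simp add: power2_eq_square algebra_simps)
    have "D^2 \<le> (1-2*f)^2" using q by (smt (verit) zero_le_power2)
    moreover have "0 \<le> 1-2*f" using f3 by linarith
    ultimately have "D \<le> 1 - 2*f" by (rule power2_le_imp_le)
    then show ?thesis using lpd by simp
  qed
  have lpf2: "-lp \<le> f + 4*f^2"
  proof -
    have e: "(1-D)*(1+D) = 4*f" using D2 by (simp add: algebra_simps power2_eq_square)
    have m: "1 + D \<ge> 2 - 4*f" using omD by simp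
    have "(1-D)*(2-4*f) \<le> (1-D)*(1+D)" using m omD0 by (rule mult_left_mono)
    then have "(1-D)*(2-4*f) \<le> 4*f" using e by simp
    then have i1: "(1-D)*(1-2*f) \<le> 2*f" by (simp add: algebra_simps)
    have q: "(2*f + 8*f^2)*(1-2*f) - 2*f = (4*f^2)*(1-4*f)" by (simp add: algebra_simps power2_eq_square)
    have "0 \<le> (4*f^2)*(1-4*f)" using h14 by simp
    then have "(2*f + 8*f^2)*(1-2*f) \<ge> 2*f" using q by linarith
    then have "(1-D)*(1-2*f) \<le> (2*f + 8*f^2)*(1-2*f)" using i1 by linarith
    moreover have "0 < 1 - 2*f" using f3 by simp
    ultimately have "1 - D \<le> 2*f + 8*f^2" by simp
    then show ?thesis using lpd by simp
  qed
  have lpb: "\<bar>lp\<bar> \<le> 1/2" using lpd Dh D1 by simp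
  have lmb: "\<bar>lm\<bar> \<le> 1" using lmd Dh D1 by simp
  have lmh: "lm \<le> -1/2" using lmd D0 by simp
  have e1: "exp(lm*t) \<le> exp(-t/2)"
  proof -
    have "lm*t \<le> (-1/2)*t" by (rule mult_right_mono[OF _ t0]) (use lmh in simp)
    then show ?thesis by simp
  qed
  have e2: "exp(lp*t) \<le> exp(-g*t)"
  proof -
    have "lp*t \<le> (-g)*t" by (rule mult_right_mono[OF _ t0]) (use lpf gf in simp)
    then show ?thesis by simp
  qed
  have e3: "exp(lm*t) \<le> exp(lp*t)"
  proof -
    have "lm*t \<le> lp*t" by (rule mult_right_mono[OF _ t0]) (use lmd lpd D0 in simp)
    then show ?thesis by simp
  qed
  have e4: "\<bar>exp(lp*t) - exp(-g*t)\<bar> \<le> (f-g+4*f^2)*t*exp(-g*t)"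
  proof -
    have x: "exp(lp*t) = exp(-g*t) * exp((lp+g)*t)" by (simp add: exp_add[symmetric] algebra_simps)
    have "exp(lp*t) \<le> exp(-g*t)" by (rule e2)
    then have ab: "\<bar>exp(lp*t) - exp(-g*t)\<bar> = exp(-g*t) * (1 - exp((lp+g)*t))"
      using x by (simp add: algebra_simps)
    have "1 + (lp+g)*t \<le> exp((lp+g)*t)" by (rule exp_ge_add_one_self)
    then have y1: "1 - exp((lp+g)*t) \<le> (-lp-g)*t" by (simp add: algebra_simps)
    have y2: "(-lp-g)*t \<le> (f-g+4*f^2)*t" by (rule mult_right_mono[OF _ t0]) (use lpf2 in simp)
    have "exp(-g*t) * (1 - exp((lp+g)*t)) \<le> exp(-g*t) * ((f-g+4*f^2)*t)"
      using y1 y2 by (intro mult_left_mono) auto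
    then show ?thesis using ab by (simp add: algebra_simps)
  qed
  have iD: "1/D \<le> 2" using Dh by (simp add: field_simps)
  have Dp: "0 < D" using Dh by simp
  have A0: "(lp*exp(lm*t) - lm*exp(lp*t))/(lp-lm) = (lp/D)*exp(lm*t) + (-lm/D)*exp(lp*t)"
    unfolding diff using Dp by (simp add: field_simps)
  have A1: "(exp(lp*t) - exp(lm*t))/(lp-lm) = (1/D)*exp(lp*t) - (1/D)*exp(lm*t)"
    unfolding diff using Dp by (simp add: field_simps)
  have iD0: "0 \<le> 1/D" using Dp by simp
  have c1: "\<bar>lp/D\<bar> \<le> 1"
  proof -
    have "\<bar>lp/D\<bar> = \<bar>lp\<bar> * (1/D)" using Dp by (simp add: abs_divide)
    also have "\<dots> \<le> (1/2) * 2" using lpb iD iD0 by (intro mult_mono) auto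
    finally show ?thesis by simp
  qed
  have c2: "\<bar>-lm/D\<bar> \<le> 2"
  proof -
    have "\<bar>-lm/D\<bar> = \<bar>lm\<bar> * (1/D)" using Dp by (simp add: abs_divide)
    also have "\<dots> \<le> 1 * 2" using lmb iD iD0 by (intro mult_mono) auto
    finally show ?thesis by simp
  qed
  have c3: "-lm/D - 1 = (1-D)/(2*D)" using Dp unfolding lmd by (simp add: field_simps)
  have c7: "(1-D)/D \<le> 8*f"
  proof -
    have "(1-D)/D = (1-D) * (1/D)" by simp
    also have "\<dots> \<le> (4*f) * 2" using omD omD0 iD iD0 by (intro mult_mono) auto
    finally show ?thesis by simp
  qed
  have c4: "(1-D)/(2*D) \<le> 4*f"
  proof -
    have "(1-D)/(2*D) = ((1-D)/D)/2" by simp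
    then show ?thesis using c7 by simp
  qed
  have c5: "0 \<le> (1-D)/(2*D)" using omD0 Dp by simp
  have c6: "1/D - 1 = (1-D)/D" using Dp by (simp add: field_simps)
  have c8: "0 \<le> (1-D)/D" using omD0 Dp by simp
  have pos: "0 < exp(lm*t)" "0 < exp(lp*t)" "0 < exp(-g*t)" "0 < exp(-t/2)" by auto
  have t1: "\<bar>(lp/D)*exp(lm*t)\<bar> \<le> 1*exp(lp*t)"
  proof -
    have "\<bar>(lp/D)*exp(lm*t)\<bar> = \<bar>lp/D\<bar>*exp(lm*t)" by (simp add: abs_mult)
    also have "\<dots> \<le> 1*exp(lp*t)" using c1 e3 pos by (intro mult_mono) auto
    finally show ?thesis .
  qed
  have t1': "\<bar>(lp/D)*exp(lm*t)\<bar> \<le> 1*exp(-t/2)"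
  proof -
    have "\<bar>(lp/D)*exp(lm*t)\<bar> = \<bar>lp/D\<bar>*exp(lm*t)" by (simp add: abs_mult)
    also have "\<dots> \<le> 1*exp(-t/2)" using c1 e1 pos by (intro mult_mono) auto
    finally show ?thesis .
  qed
  have t2: "\<bar>(-lm/D)*exp(lp*t)\<bar> \<le> 2*exp(lp*t)"
  proof -
    have "\<bar>(-lm/D)*exp(lp*t)\<bar> = \<bar>-lm/D\<bar>*exp(lp*t)" by (simp only: abs_mult) simp
    also have "\<dots> \<le> 2*exp(lp*t)" using c2 pos by (intro mult_right_mono) auto
    finally show ?thesis .
  qed
  show "\<bar>(lp*exp(lm*t) - lm*exp(lp*t))/(lp-lm)\<bar> \<le> 3*exp(-g*t)"
  proof -
    have "\<bar>(lp*exp(lm*t) - lm*exp(lp*t))/(lp-lm)\<bar> \<le> \<bar>(lp/D)*exp(lm*t)\<bar> + \<bar>(-lm/D)*exp(lp*t)\<bar>"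
      unfolding A0 by (rule abs_triangle_ineq)
    then show ?thesis using t1 t2 e2 by linarith
  qed
  have t3: "(1/D)*exp(lm*t) \<le> 2*exp(-t/2)" using iD e1 pos by (intro mult_mono) auto
  have t3': "0 \<le> (1/D)*exp(lm*t)" using iD0 pos by (intro mult_nonneg_nonneg) auto
  show "\<bar>(exp(lp*t) - exp(lm*t))/(lp-lm)\<bar> \<le> 3*exp(-g*t)"
  proof -
    have "\<bar>(1/D)*exp(lp*t) - (1/D)*exp(lm*t)\<bar> = (1/D)*(exp(lp*t) - exp(lm*t))"
    proof -
      have "(1/D)*exp(lp*t) - (1/D)*exp(lm*t) = (1/D)*(exp(lp*t) - exp(lm*t))" by (simp add: right_diff_distrib)
      moreover have "0 \<le> (1/D)*(exp(lp*t) - exp(lm*t))" using iD0 e3 by simp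
      ultimately show ?thesis by (metis abs_of_nonneg)
    qed
    also have "\<dots> \<le> 2 * (exp(lp*t) - exp(lm*t))" using iD e3 by (intro mult_right_mono) auto
    also have "\<dots> \<le> 2 * exp(lp*t)" using pos by simp
    finally have "\<bar>(1/D)*exp(lp*t) - (1/D)*exp(lm*t)\<bar> \<le> 2 * exp(lp*t)" .
    then show ?thesis using e2 pos by (subst A1) linarith
  qed
  show "\<bar>(lp*exp(lm*t) - lm*exp(lp*t))/(lp-lm) - exp(-g*t)\<bar>
           \<le> 2*exp(-t/2) + 8*f*exp(-g*t) + (f-g+4*f^2)*t*exp(-g*t)"
  proof -
    have eq: "(lp*exp(lm*t) - lm*exp(lp*t))/(lp-lm) - exp(-g*t)
       = (lp/D)*exp(lm*t) + ((1-D)/(2*D))*exp(lp*t) + (exp(lp*t) - exp(-g*t))"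
      unfolding A0 c3[symmetric] by (simp add: algebra_simps)
    have u1: "((1-D)/(2*D))*exp(lp*t) \<le> 4*f*exp(-g*t)" using c4 c5 e2 pos by (intro mult_mono) auto
    have u2: "0 \<le> ((1-D)/(2*D))*exp(lp*t)" using c5 pos by (intro mult_nonneg_nonneg) auto
    have u3: "0 \<le> f*exp(-g*t)" using f0 pos by (intro mult_nonneg_nonneg) auto
    have "\<bar>(lp*exp(lm*t) - lm*exp(lp*t))/(lp-lm) - exp(-g*t)\<bar> \<le>
      \<bar>(lp/D)*exp(lm*t)\<bar> + \<bar>((1-D)/(2*D))*exp(lp*t)\<bar> + \<bar>exp(lp*t) - exp(-g*t)\<bar>"
      unfolding eq by (rule abs3)
    then show ?thesis using t1' u1 u2 u3 e4 pos by linarith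
  qed
  show "\<bar>(exp(lp*t) - exp(lm*t))/(lp-lm) - exp(-g*t)\<bar>
           \<le> 2*exp(-t/2) + 8*f*exp(-g*t) + (f-g+4*f^2)*t*exp(-g*t)"
  proof -
    have eq: "(exp(lp*t) - exp(lm*t))/(lp-lm) - exp(-g*t)
       = ((1-D)/D)*exp(lp*t) - (1/D)*exp(lm*t) + (exp(lp*t) - exp(-g*t))"
      unfolding A1 c6[symmetric] by (simp add: algebra_simps)
    have u1: "((1-D)/D)*exp(lp*t) \<le> 8*f*exp(-g*t)" using c7 c8 e2 pos by (intro mult_mono) auto
    have u2: "0 \<le> ((1-D)/D)*exp(lp*t)" using c8 pos by (intro mult_nonneg_nonneg) auto
    have u3: "0 \<le> f*exp(-g*t)" using f0 pos by (intro mult_nonneg_nonneg) auto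
    have "\<bar>(exp(lp*t) - exp(lm*t))/(lp-lm) - exp(-g*t)\<bar> \<le>
      \<bar>((1-D)/D)*exp(lp*t)\<bar> + \<bar>(1/D)*exp(lm*t)\<bar> + \<bar>exp(lp*t) - exp(-g*t)\<bar>"
      unfolding eq by (rule abs3')
    then show ?thesis using t3 t3' u1 u2 u3 e4 pos by linarith
  qed
qed



lemma rbound:
  fixes \<alpha> \<beta> p q r t f g :: real
  assumes a0: "\<alpha> > 0" and b0: "\<beta> > 0" and p0: "0 < p" and pq: "p < q" and r0: "0 \<le> r" and r1: "r \<le> 1"
    and t0: "t \<ge> 0"
    and gd: "g = \<beta> * r powr p" and fd: "f = g + \<alpha> * r powr q"
  shows "f \<le> (\<alpha>+\<beta>) * r powr p"
    and "8*f*exp(-g*t) + (f-g+4*f^2)*t*exp(-g*t)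
         \<le> (8*(\<alpha>+\<beta>) + 2*(\<alpha> + 4*(\<alpha>+\<beta>)^2)/\<beta>) * r powr (min (q-p) p) * exp(-(g/2)*t)"
proof -
  define P where "P = r powr p"
  define M where "M = r powr (min (q-p) p)"
  define R where "R = r powr (q-p)"
  define E where "E = exp(-g*t)"
  define E2 where "E2 = exp(-(g/2)*t)"
  have P0: "0 \<le> P" and M0: "0 \<le> M" and R0: "0 \<le> R" unfolding P_def M_def R_def by auto
  have Q: "r powr q = P * R" unfolding P_def R_def by (simp add: powr_add[symmetric])
  have PM: "P \<le> M" unfolding P_def M_def using r0 r1 by (intro powr_mono') auto
  have RM: "R \<le> M" unfolding R_def M_def using r0 r1 by (intro powr_mono') auto
  have R1: "R \<le> 1" unfolding R_def using r0 r1 pq by (simp add: powr_le1)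
  have g0: "0 \<le> g" using gd b0 P0 P_def by simp
  have fP: "f \<le> (\<alpha>+\<beta>) * P"
  proof -
    have "\<alpha> * (P*R) \<le> \<alpha> * (P*1)" using a0 P0 R1 by (intro mult_left_mono) auto
    then show ?thesis using fd gd Q P_def by (simp add: algebra_simps)
  qed
  then show "f \<le> (\<alpha>+\<beta>) * r powr p" unfolding P_def .
  have f0: "0 \<le> f" using fd g0 a0 Q P0 R0 by simp
  have EE: "E = E2 * E2" unfolding E_def E2_def by (simp add: exp_add[symmetric])
  have E0: "0 < E" "0 < E2" unfolding E_def E2_def by auto
  have E2le: "E \<le> E2" unfolding E_def E2_def using g0 t0 by (simp add: mult_nonneg_nonneg)
  have gtE: "g*t*E \<le> 2*E2"
  proof -
    have "1 + (g/2)*t \<le> exp((g/2)*t)" by (rule exp_ge_add_one_self)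
    moreover have "(g/2)*t = (g*t)/2" by simp
    ultimately have "g*t \<le> 2*exp((g/2)*t)" by linarith
    then have "g*t*E2 \<le> 2*exp((g/2)*t)*E2" using E0 by (intro mult_right_mono) auto
    moreover have "exp((g/2)*t)*E2 = 1" unfolding E2_def by (simp add: exp_add[symmetric])
    ultimately have "g*t*E2 \<le> 2" by simp
    then have "g*t*E2*E2 \<le> 2*E2" using E0 by (intro mult_right_mono) auto
    then show ?thesis unfolding EE by (simp add: algebra_simps)
  qed
  have PtE: "P*t*E \<le> (2/\<beta>)*E2"
  proof -
    have "\<beta>*(P*t*E) \<le> 2*E2" using gtE gd P_def by (simp add: algebra_simps)
    then show ?thesis using b0 by (simp add: field_simps)
  qed
  have PtE0: "0 \<le> P*t*E" using P0 t0 E0 by simp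
  define K1 where "K1 = \<alpha> + 4*(\<alpha>+\<beta>)^2"
  have s1: "8*f*E \<le> 8*(\<alpha>+\<beta>)*M*E2"
  proof -
    have "(\<alpha>+\<beta>)*P \<le> (\<alpha>+\<beta>)*M" using PM a0 b0 by (intro mult_left_mono) auto
    then have "f \<le> (\<alpha>+\<beta>)*M" using fP by linarith
    then have "f*E \<le> ((\<alpha>+\<beta>)*M)*E2" using E2le E0 a0 b0 M0 by (intro mult_mono) auto
    then show ?thesis by (simp add: algebra_simps)
  qed
  have s2: "(f-g+4*f^2)*t*E \<le> (2*K1/\<beta>)*M*E2"
  proof -
    have ff: "f^2 \<le> ((\<alpha>+\<beta>)*P)^2" using f0 fP by (intro power_mono) auto
    have "f - g + 4*f^2 \<le> \<alpha>*(P*R) + 4*((\<alpha>+\<beta>)*P)^2" using fd Q ff by simp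
    also have "\<dots> = P * (\<alpha>*R + 4*(\<alpha>+\<beta>)^2*P)" by (simp add: algebra_simps power2_eq_square)
    finally have h1: "f - g + 4*f^2 \<le> P * (\<alpha>*R + 4*(\<alpha>+\<beta>)^2*P)" .
    have h2: "\<alpha>*R + 4*(\<alpha>+\<beta>)^2*P \<le> K1 * M"
    proof -
      have "\<alpha>*R \<le> \<alpha>*M" using RM a0 by (intro mult_left_mono) auto
      moreover have "4*(\<alpha>+\<beta>)^2*P \<le> 4*(\<alpha>+\<beta>)^2*M" using PM by (intro mult_left_mono) auto
      ultimately show ?thesis by (simp add: algebra_simps K1_def)
    qed
    have h3: "0 \<le> \<alpha>*R + 4*(\<alpha>+\<beta>)^2*P" using a0 R0 P0 by simp
    have "(f-g+4*f^2)*t*E \<le> (P * (\<alpha>*R + 4*(\<alpha>+\<beta>)^2*P))*t*E"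
      using h1 t0 E0 by (intro mult_right_mono) auto
    also have "\<dots> = (\<alpha>*R + 4*(\<alpha>+\<beta>)^2*P) * (P*t*E)" by (simp add: algebra_simps)
    also have "\<dots> \<le> (K1*M) * ((2/\<beta>)*E2)" by (rule mult_mono[OF h2 PtE]) (use h2 h3 PtE0 in linarith)+
    also have "\<dots> = (2*K1/\<beta>)*M*E2" by simp
    finally show ?thesis .
  qed
  show "8*f*exp(-g*t) + (f-g+4*f^2)*t*exp(-g*t)
         \<le> (8*(\<alpha>+\<beta>) + 2*(\<alpha> + 4*(\<alpha>+\<beta>)^2)/\<beta>) * r powr (min (q-p) p) * exp(-(g/2)*t)"
    using s1 s2 unfolding E_def[symmetric] E2_def[symmetric] M_def[symmetric] K1_def[symmetric]
    by (simp add: algebra_simps add_divide_distrib)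
qed



definition VV :: "real \<Rightarrow> real \<Rightarrow> complex \<Rightarrow> complex \<Rightarrow> complex" where
  "VV f t x0 x1 = (let lp = (-1 + csqrt (complex_of_real (1 - 4*f)))/2;
      lm = (-1 - csqrt (complex_of_real (1 - 4*f)))/2 in
      (lp * exp (lm * of_real t) - lm * exp (lp * of_real t)) / (lp - lm) * x0
     + (exp (lp * of_real t) - exp (lm * of_real t)) / (lp - lm) * x1)"

lemma cm2: "cmod (complex_of_real A * x0 + complex_of_real B * x1) \<le> \<bar>A\<bar> * cmod x0 + \<bar>B\<bar> * cmod x1"
  using norm_triangle_ineq[of "complex_of_real A * x0" "complex_of_real B * x1"] by (simp add: norm_mult)

lemma gen:
  fixes \<alpha> \<beta> p q :: real
  assumes a0: "\<alpha> > 0" and b0: "\<beta> > 0" and p0: "0 < p" and pq: "p < q"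
  shows "\<exists>\<epsilon>0>0. \<exists>c>0. \<exists>C>0. \<forall>(x0::complex) x1 t r f.
     t \<ge> 0 \<and> 0 \<le> r \<and> r \<le> \<epsilon>0 \<and> f = \<beta> * r powr p + \<alpha> * r powr q \<longrightarrow>
     cmod (VV f t x0 x1) \<le> C * exp (- c * r powr p * t) * (cmod x0 + cmod x1) \<and>
     cmod (VV f t x0 x1 - complex_of_real (exp (- \<beta> * r powr p * t)) * (x0 + x1))
       \<le> C * (exp (- c * t) + r powr (min (q-p) p) * exp (- c * r powr p * t)) * (cmod x0 + cmod x1)"
proof -
  define K where "K = 8*(\<alpha>+\<beta>) + 2*(\<alpha> + 4*(\<alpha>+\<beta>)^2)/\<beta>"
  define e0 where "e0 = min 1 ((3/(16*(\<alpha>+\<beta>))) powr (1/p))"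
  define c where "c = min (\<beta>/2) (1/2::real)"
  define C where "C = 3 + K"
  have K0: "0 \<le> K" unfolding K_def using a0 b0 by simp
  have e00: "0 < e0" unfolding e0_def using a0 b0 by simp
  have c0: "0 < c" unfolding c_def using b0 by simp
  have C0: "0 < C" unfolding C_def using K0 by simp
  have main: "cmod (VV f t x0 x1) \<le> C * exp (- c * r powr p * t) * (cmod x0 + cmod x1) \<and>
     cmod (VV f t x0 x1 - complex_of_real (exp (- \<beta> * r powr p * t)) * (x0 + x1))
       \<le> C * (exp (- c * t) + r powr (min (q-p) p) * exp (- c * r powr p * t)) * (cmod x0 + cmod x1)"
    if t0: "t \<ge> 0" and r0: "0 \<le> r" and re: "r \<le> e0" and fd: "f = \<beta> * r powr p + \<alpha> * r powr q"
    for x0 x1 :: complex and t r f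
  proof -
    define g where "g = \<beta> * r powr p"
    have r1: "r \<le> 1" using re unfolding e0_def by simp
    have fd': "f = g + \<alpha> * r powr q" using fd g_def by simp
    note rb = rbound[OF a0 b0 p0 pq r0 r1 t0 g_def fd']
    have "r powr p \<le> ((3/(16*(\<alpha>+\<beta>))) powr (1/p)) powr p"
      using re r0 p0 unfolding e0_def by (intro powr_mono2) auto
    also have "\<dots> = 3/(16*(\<alpha>+\<beta>))" using p0 a0 b0 by (simp add: powr_powr)
    finally have rp: "r powr p \<le> 3/(16*(\<alpha>+\<beta>))" .
    have "(\<alpha>+\<beta>) * r powr p \<le> (\<alpha>+\<beta>) * (3/(16*(\<alpha>+\<beta>)))"
      using rp a0 b0 by (intro mult_left_mono) auto
    also have "\<dots> = 3/16" using a0 b0 by (simp add: field_simps)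
    finally have f3: "f \<le> 3/16" using rb(1) by linarith
    have g0: "0 \<le> g" unfolding g_def using b0 by simp
    have gf: "g \<le> f" unfolding fd' using a0 by simp
    define D where "D = sqrt (1 - 4*f)"
    define lp where "lp = (-1 + D)/2"
    define lm where "lm = (-1 - D)/2"
    note co = core[OF g0 gf f3 t0 D_def lp_def lm_def]
    define A0 where "A0 = (lp*exp(lm*t) - lm*exp(lp*t))/(lp-lm)"
    define A1 where "A1 = (exp(lp*t) - exp(lm*t))/(lp-lm)"
    have cs: "csqrt (complex_of_real (1 - 4*f)) = complex_of_real D"
      unfolding D_def using f3 by (intro csqrt_of_real) simp
    have VVe: "VV f t x0 x1 = complex_of_real A0 * x0 + complex_of_real A1 * x1"
      unfolding VV_def Let_def cs A0_def A1_def lp_def lm_def by (simp flip: exp_of_real)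
    have VVe2: "VV f t x0 x1 - complex_of_real (exp (- g * t)) * (x0 + x1)
       = complex_of_real (A0 - exp(-g*t)) * x0 + complex_of_real (A1 - exp(-g*t)) * x1"
      unfolding VVe by (simp add: algebra_simps)
    define E where "E = exp(-g*t)"
    define H where "H = exp(-t/2)"
    define M where "M = r powr (min (q-p) p)"
    define E2 where "E2 = exp(-(g/2)*t)"
    have M0: "0 \<le> M" unfolding M_def by simp
    have Pt0: "0 \<le> r powr p * t" using t0 by simp
    have cb: "c \<le> \<beta>" "c \<le> \<beta>/2" unfolding c_def using b0 by auto
    have "c * (r powr p * t) \<le> \<beta> * (r powr p * t)" by (rule mult_right_mono[OF cb(1) Pt0])
    then have Ec: "E \<le> exp (- c * r powr p * t)" unfolding E_def g_def by (simp add: algebra_simps)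
    have "c * (r powr p * t) \<le> (\<beta>/2) * (r powr p * t)" by (rule mult_right_mono[OF cb(2) Pt0])
    then have E2c: "E2 \<le> exp (- c * r powr p * t)" unfolding E2_def g_def by (simp add: algebra_simps)
    have ch: "c \<le> 1/2" unfolding c_def by simp
    have "c * t \<le> (1/2) * t" by (rule mult_right_mono[OF ch t0])
    then have Hc: "H \<le> exp (- c * t)" unfolding H_def by simp
    have B1: "\<bar>A0\<bar> \<le> 3*E" "\<bar>A1\<bar> \<le> 3*E" using co(1,2) unfolding A0_def A1_def E_def by blast+
    have B2: "\<bar>A0 - E\<bar> \<le> 2*H + K*M*E2"
      using co(3) rb(2) unfolding A0_def A1_def E_def H_def K_def M_def E2_def by linarith
    have B3: "\<bar>A1 - E\<bar> \<le> 2*H + K*M*E2"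
      using co(4) rb(2) unfolding A0_def A1_def E_def H_def K_def M_def E2_def by linarith
    have n0: "0 \<le> cmod x0" "0 \<le> cmod x1" by auto
    have "cmod (VV f t x0 x1) \<le> \<bar>A0\<bar> * cmod x0 + \<bar>A1\<bar> * cmod x1" unfolding VVe by (rule cm2)
    also have "\<dots> \<le> (3*E) * cmod x0 + (3*E) * cmod x1"
      using B1 n0 by (intro add_mono mult_right_mono) auto
    also have "\<dots> \<le> C * exp (- c * r powr p * t) * (cmod x0 + cmod x1)"
    proof -
      have x1: "3*E \<le> 3*exp (- c * r powr p * t)" using Ec by simp
      have "3*exp (- c * r powr p * t) \<le> (3+K)*exp (- c * r powr p * t)" using K0 by (intro mult_right_mono) auto
      then have "3*E \<le> C * exp (- c * r powr p * t)" unfolding C_def using x1 by linarith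
      then have "(3*E) * (cmod x0 + cmod x1) \<le> C * exp (- c * r powr p * t) * (cmod x0 + cmod x1)"
        using n0 by (intro mult_right_mono) auto
      then show ?thesis by (simp add: distrib_left)
    qed
    finally have P1: "cmod (VV f t x0 x1) \<le> C * exp (- c * r powr p * t) * (cmod x0 + cmod x1)" .
    have "cmod (VV f t x0 x1 - complex_of_real (exp (- \<beta> * r powr p * t)) * (x0 + x1))
        \<le> \<bar>A0 - E\<bar> * cmod x0 + \<bar>A1 - E\<bar> * cmod x1"
    proof -
      have m: "- (\<beta> * r powr p) * t = - \<beta> * r powr p * t" by simp
      show ?thesis using VVe2 cm2 unfolding g_def E_def m by metis
    qed
    also have "\<dots> \<le> (2*H + K*M*E2) * cmod x0 + (2*H + K*M*E2) * cmod x1"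
      using B2 B3 n0 by (intro add_mono mult_right_mono) auto
    also have "\<dots> \<le> C * (exp (- c * t) + M * exp (- c * r powr p * t)) * (cmod x0 + cmod x1)"
    proof -
      have "K*M*E2 \<le> K*M*exp (- c * r powr p * t)" using E2c K0 M0 by (intro mult_left_mono) auto
      moreover have "K*M*exp (- c * r powr p * t) \<le> C * (M*exp (- c * r powr p * t))"
        unfolding C_def using M0 by (simp add: algebra_simps)
      moreover have "2*H \<le> C * exp (- c * t)"
      proof -
        have x1: "2*H \<le> 2*exp (- c * t)" using Hc by simp
        have "2*exp (- c * t) \<le> (3+K)*exp (- c * t)" using K0 by (intro mult_right_mono) auto
        then show ?thesis unfolding C_def using x1 by linarith
      qed
      ultimately have "2*H + K*M*E2 \<le> C * (exp (- c * t) + M * exp (- c * r powr p * t))"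
        by (simp add: distrib_left)
      then have "(2*H + K*M*E2) * (cmod x0 + cmod x1) \<le> C * (exp (- c * t) + M * exp (- c * r powr p * t)) * (cmod x0 + cmod x1)"
        using n0 by (intro mult_right_mono) auto
      then show ?thesis by (simp add: distrib_left)
    qed
    finally show ?thesis using P1 unfolding M_def by simp
  qed
  show ?thesis using e00 c0 C0 main by blast
qed



lemma vhat_VV: "vhat a b \<sigma> v0 v1 t \<xi> = VV (a*(norm \<xi>)^2 + b * norm \<xi> powr (2*\<sigma>)) t (v0 \<xi>) (v1 \<xi>)"
  by (simp add: vhat_def VV_def lam_plus_def lam_minus_def Let_def)

theorem proposition3p1:
  fixes a b \<sigma> :: real
  assumes "a > 0" and "b > 0" and "\<sigma> > 0" and "\<sigma> \<noteq> 1"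
  shows "\<exists>\<epsilon>0>0. \<exists>c>0. \<exists>C>0. \<forall>(v0 :: real^'n \<Rightarrow> complex) v1 t \<xi>.
     t \<ge> 0 \<and> norm \<xi> \<le> \<epsilon>0 \<longrightarrow>
     (\<sigma> < 1 \<longrightarrow>
        cmod (vhat a b \<sigma> v0 v1 t \<xi>)
          \<le> C * exp (- c * norm \<xi> powr (2*\<sigma>) * t) * (cmod (v0 \<xi>) + cmod (v1 \<xi>))
      \<and> cmod (vhat a b \<sigma> v0 v1 t \<xi> - complex_of_real (exp (- b * norm \<xi> powr (2*\<sigma>) * t)) * (v0 \<xi> + v1 \<xi>))
          \<le> C * (exp (- c * t) + norm \<xi> powr (min (2 - 2*\<sigma>) (2*\<sigma>)) * exp (- c * norm \<xi> powr (2*\<sigma>) * t))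
              * (cmod (v0 \<xi>) + cmod (v1 \<xi>))) \<and>
     (\<sigma> > 1 \<longrightarrow>
        cmod (vhat a b \<sigma> v0 v1 t \<xi>)
          \<le> C * exp (- c * (norm \<xi>)^2 * t) * (cmod (v0 \<xi>) + cmod (v1 \<xi>))
      \<and> cmod (vhat a b \<sigma> v0 v1 t \<xi> - complex_of_real (exp (- a * (norm \<xi>)^2 * t)) * (v0 \<xi> + v1 \<xi>))
          \<le> C * (exp (- c * t) + norm \<xi> powr (min 2 (2*\<sigma> - 2)) * exp (- c * (norm \<xi>)^2 * t))
              * (cmod (v0 \<xi>) + cmod (v1 \<xi>)))"
proof (cases "\<sigma> < 1")
  case True
  have "0 < 2*\<sigma>" "2*\<sigma> < 2" using assms True by auto
  from gen[OF assms(1) assms(2) this] obtain e0 c C where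
    e0: "e0 > 0" "c > 0" "C > 0" and H: "\<And>(x0::complex) x1 t r f.
     t \<ge> 0 \<and> 0 \<le> r \<and> r \<le> e0 \<and> f = b * r powr (2*\<sigma>) + a * r powr 2 \<Longrightarrow>
     cmod (VV f t x0 x1) \<le> C * exp (- c * r powr (2*\<sigma>) * t) * (cmod x0 + cmod x1) \<and>
     cmod (VV f t x0 x1 - complex_of_real (exp (- b * r powr (2*\<sigma>) * t)) * (x0 + x1))
       \<le> C * (exp (- c * t) + r powr (min (2-2*\<sigma>) (2*\<sigma>)) * exp (- c * r powr (2*\<sigma>) * t)) * (cmod x0 + cmod x1)"
    by blast
  show ?thesis
  proof -
   have key: "\<And>(v0 :: real^'n \<Rightarrow> complex) v1 (t::real) \<xi>. 0 \<le> t \<and> norm \<xi> \<le> e0 \<Longrightarrow> cmod (vhat a b \<sigma> v0 v1 t \<xi>)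
          \<le> C * exp (- c * norm \<xi> powr (2*\<sigma>) * t) * (cmod (v0 \<xi>) + cmod (v1 \<xi>))
      \<and> cmod (vhat a b \<sigma> v0 v1 t \<xi> - complex_of_real (exp (- b * norm \<xi> powr (2*\<sigma>) * t)) * (v0 \<xi> + v1 \<xi>))
          \<le> C * (exp (- c * t) + norm \<xi> powr (min (2 - 2*\<sigma>) (2*\<sigma>)) * exp (- c * norm \<xi> powr (2*\<sigma>) * t))
              * (cmod (v0 \<xi>) + cmod (v1 \<xi>))"
   proof -
    fix v0 v1 :: "real^'n \<Rightarrow> complex" and t :: real and \<xi> :: "real^'n"
    assume A: "0 \<le> t \<and> norm \<xi> \<le> e0"
    have fe: "a*(norm \<xi>)^2 + b * norm \<xi> powr (2*\<sigma>) = b * norm \<xi> powr (2*\<sigma>) + a * norm \<xi> powr 2" by simp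
    note HH = H[of t "norm \<xi>" "b * norm \<xi> powr (2*\<sigma>) + a * norm \<xi> powr 2" "v0 \<xi>" "v1 \<xi>"]
    have HH': "cmod (vhat a b \<sigma> v0 v1 t \<xi>)
          \<le> C * exp (- c * norm \<xi> powr (2*\<sigma>) * t) * (cmod (v0 \<xi>) + cmod (v1 \<xi>))
      \<and> cmod (vhat a b \<sigma> v0 v1 t \<xi> - complex_of_real (exp (- b * norm \<xi> powr (2*\<sigma>) * t)) * (v0 \<xi> + v1 \<xi>))
          \<le> C * (exp (- c * t) + norm \<xi> powr (min (2 - 2*\<sigma>) (2*\<sigma>)) * exp (- c * norm \<xi> powr (2*\<sigma>) * t))
              * (cmod (v0 \<xi>) + cmod (v1 \<xi>))"
      unfolding vhat_VV fe using HH A norm_ge_zero[of \<xi>] by blast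
    show "cmod (vhat a b \<sigma> v0 v1 t \<xi>)
          \<le> C * exp (- c * norm \<xi> powr (2*\<sigma>) * t) * (cmod (v0 \<xi>) + cmod (v1 \<xi>))
      \<and> cmod (vhat a b \<sigma> v0 v1 t \<xi> - complex_of_real (exp (- b * norm \<xi> powr (2*\<sigma>) * t)) * (v0 \<xi> + v1 \<xi>))
          \<le> C * (exp (- c * t) + norm \<xi> powr (min (2 - 2*\<sigma>) (2*\<sigma>)) * exp (- c * norm \<xi> powr (2*\<sigma>) * t))
              * (cmod (v0 \<xi>) + cmod (v1 \<xi>))" using HH' by blast
   qed
   have ns: "\<not> \<sigma> > 1" using True by simp
   show ?thesis
     apply (rule exI[of _ e0], rule conjI[OF e0(1)])
     apply (rule exI[of _ c], rule conjI[OF e0(2)])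
     apply (rule exI[of _ C], rule conjI[OF e0(3)])
     apply (intro allI impI)
     subgoal for v0 v1 t \<xi> using key[of t \<xi> v0 v1] ns True by blast
     done
  qed
next
  case False
  then have s1: "\<sigma> > 1" using assms by auto
  have "0 < (2::real)" "2 < 2*\<sigma>" using s1 by auto
  from gen[OF assms(2) assms(1) this] obtain e0 c C where
    e0: "e0 > 0" "c > 0" "C > 0" and H: "\<And>(x0::complex) x1 t r f.
     t \<ge> 0 \<and> 0 \<le> r \<and> r \<le> e0 \<and> f = a * r powr 2 + b * r powr (2*\<sigma>) \<Longrightarrow>
     cmod (VV f t x0 x1) \<le> C * exp (- c * r powr 2 * t) * (cmod x0 + cmod x1) \<and>
     cmod (VV f t x0 x1 - complex_of_real (exp (- a * r powr 2 * t)) * (x0 + x1))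
       \<le> C * (exp (- c * t) + r powr (min (2*\<sigma>-2) 2) * exp (- c * r powr 2 * t)) * (cmod x0 + cmod x1)"
    by blast
  show ?thesis
  proof -
   have key: "\<And>(v0 :: real^'n \<Rightarrow> complex) v1 (t::real) \<xi>. 0 \<le> t \<and> norm \<xi> \<le> e0 \<Longrightarrow> cmod (vhat a b \<sigma> v0 v1 t \<xi>)
          \<le> C * exp (- c * (norm \<xi>)^2 * t) * (cmod (v0 \<xi>) + cmod (v1 \<xi>))
      \<and> cmod (vhat a b \<sigma> v0 v1 t \<xi> - complex_of_real (exp (- a * (norm \<xi>)^2 * t)) * (v0 \<xi> + v1 \<xi>))
          \<le> C * (exp (- c * t) + norm \<xi> powr (min 2 (2*\<sigma> - 2)) * exp (- c * (norm \<xi>)^2 * t))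
              * (cmod (v0 \<xi>) + cmod (v1 \<xi>))"
   proof -
    fix v0 v1 :: "real^'n \<Rightarrow> complex" and t :: real and \<xi> :: "real^'n"
    assume A: "0 \<le> t \<and> norm \<xi> \<le> e0"
    note HH = H[of t "norm \<xi>" "a * norm \<xi> powr 2 + b * norm \<xi> powr (2*\<sigma>)" "v0 \<xi>" "v1 \<xi>"]
    have fe: "a*(norm \<xi>)^2 + b * norm \<xi> powr (2*\<sigma>) = a * norm \<xi> powr 2 + b * norm \<xi> powr (2*\<sigma>)" by simp
    have p2: "norm \<xi> powr 2 = (norm \<xi>)^2" by simp
    have mm: "min (2*\<sigma>-2) 2 = min 2 (2*\<sigma>-2)" by (rule min.commute)
    have HH': "cmod (vhat a b \<sigma> v0 v1 t \<xi>)
          \<le> C * exp (- c * (norm \<xi>)^2 * t) * (cmod (v0 \<xi>) + cmod (v1 \<xi>))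
      \<and> cmod (vhat a b \<sigma> v0 v1 t \<xi> - complex_of_real (exp (- a * (norm \<xi>)^2 * t)) * (v0 \<xi> + v1 \<xi>))
          \<le> C * (exp (- c * t) + norm \<xi> powr (min 2 (2*\<sigma> - 2)) * exp (- c * (norm \<xi>)^2 * t))
              * (cmod (v0 \<xi>) + cmod (v1 \<xi>))"
      unfolding vhat_VV fe using HH A norm_ge_zero[of \<xi>] unfolding mm p2 by blast
    show "cmod (vhat a b \<sigma> v0 v1 t \<xi>)
          \<le> C * exp (- c * (norm \<xi>)^2 * t) * (cmod (v0 \<xi>) + cmod (v1 \<xi>))
      \<and> cmod (vhat a b \<sigma> v0 v1 t \<xi> - complex_of_real (exp (- a * (norm \<xi>)^2 * t)) * (v0 \<xi> + v1 \<xi>))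
          \<le> C * (exp (- c * t) + norm \<xi> powr (min 2 (2*\<sigma> - 2)) * exp (- c * (norm \<xi>)^2 * t))
              * (cmod (v0 \<xi>) + cmod (v1 \<xi>))" using HH' by blast
   qed
   have ns: "\<not> \<sigma> < 1" using s1 by simp
   show ?thesis
     apply (rule exI[of _ e0], rule conjI[OF e0(1)])
     apply (rule exI[of _ c], rule conjI[OF e0(2)])
     apply (rule exI[of _ C], rule conjI[OF e0(3)])
     apply (intro allI impI)
     subgoal for v0 v1 t \<xi> using key[of t \<xi> v0 v1] ns s1 by blast
     done
  qed
qed


end
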